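(* Let $P$ be a program of the imperative language described in the context, and suppose $\vdash P : M$ is derivable in the deterministic calculus, where $M$ is an $n\times n$ matrix with coefficients in $\{0,1,2\}^p\to\mathrm{mwp}^{\infty}$. Then for every $\vec a\in\{0,1,2\}^p$: $\vdash_{\mathrm{JK}} P : M[\vec a]$ is derivable in the original Jones–Kristiansen calculus if and only if no coefficient of $M[\vec a]$ equals $\infty$.
   Context: Language. Variables range over $X_1,\dots,X_n$ (a fixed finite set), and $b$ ranges over boolean expressions (unspecified; they play no role). Expressions: $e ::= X \mid X - Y \mid X + Y \mid X * Y$. Commands: $C ::= X = e \mid \texttt{if } b \texttt{ then } C \texttt{ else } C \mid \texttt{while } b \texttt{ do } \{C\} \mid \texttt{loop } X \{C\} \mid C;C$, where $\texttt{loop } X\{C\}$ executes $C$ $X$ times. A program is a sequential composition of commands. Semi-rings. $\mathrm{mwp}$ has carrier $\{0,m,w,p\}$ with $0<m<w<p$, addition $\max$, and $\alpha\times\beta=\max(\alpha,\beta)$ if $\alpha,\beta\neq0$, $0$ otherwise. $\mathrm{mwp}^\infty$ has carrier $\{0,m,w,p,\infty\}$ with $0<m<w<p<\infty$, addition $\max$, and $\alpha\times\beta=0$ if $\alpha,\beta\neq\infty$ and one of them is $0$, $\max(\alpha,\beta)$ otherwise. $\{0,1,2\}^p\to\mathrm{mwp}^\infty$ is the semi-ring of functions with pointwise operations (constants identified with constant functions). Matrices are $n\times n$ with componentwise $\oplus$, usual product $\otimes$, unit $\mathbf{1}$ ($m$ on the diagonal, $0$ elsewhere), closure $M^*=\mathbf{1}\oplus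 M\oplus M^2\oplus\cdots$. $M[\vec a]$ is $M$ with every coefficient evaluated at $\vec a$. $\delta(i,k)(\vec a)=m$ if $a_k=i$, $0$ otherwise. $\{^{\alpha}_i\}$ is the $n$-vector with $\alpha$ in row $i$ and $0$ elsewhere, $\{^\alpha_i,^\beta_j\}=\{^\alpha_i\}\oplus\{^\beta_j\}$, $\alpha V$ is scalar multiplication, $\mathbf{1}\xleftarrow{j}V$ is the unit matrix with column $j$ replaced by $V$, $\{^\alpha_i\to j\}$ is the matrix with $\alpha$ at $(i,j)$ and $0$ elsewhere, and $\mathrm{var}(e)$ is the set of variables of $e$. Original (non-deterministic) Jones–Kristiansen calculus $\vdash_{\mathrm{JK}}$, over $\mathrm{mwp}$: (E1) $\vdash_{\mathrm{JK}} X_i:\{^m_i\}$; (E2) $\vdash_{\mathrm{JK}} e:\bigoplus\{\{^w_i\}\mid X_i\in\mathrm{var}(e)\}$; (E3) for $\star\in\{+,-\}$, from $\vdash_{\mathrm{JK}}X_i:V_1$, $\vdash_{\mathrm{JK}}X_j:V_2$ infer $\vdash_{\mathrm{JK}}X_i\star X_j: pV_1\oplus V_2$; (E4) same premises, conclusion $V_1\oplus pV_2$; (A) from $\vdash_{\mathrm{JK}}e:V$ infer $\vdash_{\mathrm{JK}}X_j=e:\mathbf{1}\xleftarrow{j}V$; (C) $C_1;C_2:M_1\otimes M_2$; (I) $\texttt{if } b \texttt{ then } C_1\texttt{ else } C_2 : M_1\oplus M_2$; (L) from $\vdash_{\mathrm{JK}}C:M$, provided $M^*_{ii}=m$ for all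 $i$, infer $\vdash_{\mathrm{JK}}\texttt{loop } X_l\{C\}: M^*\oplus\{^p_l\to j\mid\exists i,\ M^*_{ij}=p\}$; (W) from $\vdash_{\mathrm{JK}}C:M$, provided $M^*_{ii}=m$ for all $i$ and $M^*_{ij}\neq p$ for all $i,j$, infer $\vdash_{\mathrm{JK}}\texttt{while } b\texttt{ do }\{C\}:M^*$. Deterministic calculus $\vdash$, over $\{0,1,2\}^p\to\mathrm{mwp}^\infty$: each application of rule E$^A$ receives its own choice index $k\in\{1,\dots,p\}$ ($p$ = number of applications). (E$^A$) for $\star\in\{+,-\}$: $\vdash X_i\star X_j:\delta(0,k)\{^m_i,^p_j\}\oplus\delta(1,k)\{^p_i,^m_j\}\oplus\delta(2,k)\{^w_i,^w_j\}$; (E$^M$) $\vdash X_i*X_j:\{^w_i,^w_j\}$; (E$^S$) $\vdash X_i:\{^m_i\}$; rules (A), (C), (I) as in the original calculus; (L$^\infty$) from $\vdash C:M$ infer $\vdash\texttt{loop } X_l\{C\}:M^*\oplus\{^\infty_j\to j\mid M^*_{jj}\neq m\}\oplus\{^p_l\to j\mid\exists i,\ M^*_{ij}=p\}$; (W$^\infty$) from $\vdash C:M$ infer $\vdash\texttt{while } b\texttt{ do }\{C\}:M^*\oplus\{^\infty_j\to j\mid M^*_{jj}\neq m\}\oplus\{^\infty_i\to j\mid M^*_{ij}=p\}$ (conditions understood pointwise for each choice assignment). *)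

theory Defs
  imports Main "HOL-Library.FuncSet" "HOL-Library.Function_Algebras"
begin

text \<open>Variables X_0, ..., X_(n-1) are represented by their indices (natural numbers).
  Boolean expressions are left abstract (type parameter 'b).\<close>

datatype expr = Var nat | Minus nat nat | Plus nat nat | Times nat nat

datatype 'b cmd =
    Assign nat expr
  | If 'b "'b cmd" "'b cmd"
  | While 'b "'b cmd"
  | Loop nat "'b cmd"
  | Seq "'b cmd" "'b cmd"

fun evars :: "expr \<Rightarrow> nat set" where
  "evars (Var i) = {i}"
| "evars (Minus i j) = {i, j}"
| "evars (Plus i j) = {i, j}"
| "evars (Times i j) = {i, j}"

fun cvars :: "'b cmd \<Rightarrow> nat set" where
  "cvars (Assign j e) = insert j (evars e)"
| "cvars (If b C1 C2) = cvars C1 \<union> cvars C2"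
| "cvars (While b C) = cvars C"
| "cvars (Loop l C) = insert l (cvars C)"
| "cvars (Seq C1 C2) = cvars C1 \<union> cvars C2"

section \<open>The semi-ring mwp^infinity (mwp is its subset without Infty)\<close>

datatype mwpinf = Zero | M | W | P | Infty

fun rank :: "mwpinf \<Rightarrow> nat" where
  "rank Zero = 0" | "rank M = 1" | "rank W = 2" | "rank P = 3" | "rank Infty = 4"

lemma rank_inj: "rank x = rank y \<Longrightarrow> x = y"
  by (cases x; cases y; simp)

instantiation mwpinf :: linorder
begin
definition less_eq_mwpinf :: "mwpinf \<Rightarrow> mwpinf \<Rightarrow> bool" where
  "less_eq_mwpinf x y \<longleftrightarrow> rank x \<le> rank y"
definition less_mwpinf :: "mwpinf \<Rightarrow> mwpinf \<Rightarrow> bool" where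
  "less_mwpinf x y \<longleftrightarrow> rank x < rank y"
instance
  by standard (auto simp: less_eq_mwpinf_def less_mwpinf_def intro: rank_inj)
end

instance mwpinf :: finite
proof
  have "(UNIV :: mwpinf set) = {Zero, M, W, P, Infty}"
    by (auto intro: mwpinf.exhaust)
  then show "finite (UNIV :: mwpinf set)" by (metis finite.emptyI finite_insert)
qed

instantiation mwpinf :: "{zero, one, plus, times}"
begin
definition zero_mwpinf :: mwpinf where "zero_mwpinf = Zero"
definition one_mwpinf :: mwpinf where "one_mwpinf = M"
definition plus_mwpinf :: "mwpinf \<Rightarrow> mwpinf \<Rightarrow> mwpinf" where
  "plus_mwpinf x y = max x y"
text \<open>mwp^infinity product: 0 if neither is Infty and one of them is 0, max otherwise.
  On the Infty-free part this coincides with the mwp product.\<close>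
definition times_mwpinf :: "mwpinf \<Rightarrow> mwpinf \<Rightarrow> mwpinf" where
  "times_mwpinf x y =
     (if x \<noteq> Infty \<and> y \<noteq> Infty \<and> (x = Zero \<or> y = Zero) then Zero else max x y)"
instance ..
end

type_synonym 'a vec = "nat \<Rightarrow> 'a"
type_synonym 'a mat = "nat \<Rightarrow> nat \<Rightarrow> 'a"

definition vsing :: "nat \<Rightarrow> 'a::zero \<Rightarrow> 'a vec" where
  "vsing i \<alpha> = (\<lambda>r. if r = i then \<alpha> else 0)"

definition vadd :: "'a::plus vec \<Rightarrow> 'a vec \<Rightarrow> 'a vec" where
  "vadd U V = (\<lambda>r. U r + V r)"

definition vscale :: "'a::times \<Rightarrow> 'a vec \<Rightarrow> 'a vec" where
  "vscale \<alpha> V = (\<lambda>r. \<alpha> * V r)"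

definition madd :: "'a::plus mat \<Rightarrow> 'a mat \<Rightarrow> 'a mat" where
  "madd A B = (\<lambda>i j. A i j + B i j)"

definition mmul :: "nat \<Rightarrow> 'a::{zero,plus,times} mat \<Rightarrow> 'a mat \<Rightarrow> 'a mat" where
  "mmul n A B = (\<lambda>i j. if i < n \<and> j < n
      then foldr (\<lambda>k acc. A i k * B k j + acc) [0..<n] 0 else 0)"

definition mone :: "nat \<Rightarrow> 'a::{zero,one} mat" where
  "mone n = (\<lambda>i j. if i = j \<and> i < n then 1 else 0)"

definition colupd :: "nat \<Rightarrow> nat \<Rightarrow> 'a::{zero,one} vec \<Rightarrow> 'a mat" where
  "colupd n j V = (\<lambda>r c. if c = j then (if r < n then V r else 0) else mone n r c)"

definition msing :: "nat \<Rightarrow> nat \<Rightarrow> 'a::zero \<Rightarrow> 'a mat" where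
  "msing i j \<alpha> = (\<lambda>r c. if r = i \<and> c = j then \<alpha> else 0)"

fun mpow :: "nat \<Rightarrow> 'a::{zero,one,plus,times} mat \<Rightarrow> nat \<Rightarrow> 'a mat" where
  "mpow n A 0 = mone n"
| "mpow n A (Suc k) = mmul n (mpow n A k) A"

text \<open>Closure M^* = 1 + M + M^2 + ... over mwp^infinity (supremum w.r.t. max, a finite lattice).\<close>
definition mstar :: "nat \<Rightarrow> mwpinf mat \<Rightarrow> mwpinf mat" where
  "mstar n A = (\<lambda>i j. Max (range (\<lambda>k. mpow n A k i j)))"

section \<open>Original Jones-Kristiansen calculus (over mwp, i.e. Infty-free coefficients)\<close>

definition wvars :: "expr \<Rightarrow> mwpinf vec" where
  "wvars e = (\<lambda>r. if r \<in> evars e then W else Zero)"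

inductive jk_e :: "expr \<Rightarrow> mwpinf vec \<Rightarrow> bool" where
  E1: "jk_e (Var i) (vsing i M)"
| E2: "jk_e e (wvars e)"
| E3_minus: "jk_e (Var i) V1 \<Longrightarrow> jk_e (Var j) V2 \<Longrightarrow> jk_e (Minus i j) (vadd (vscale P V1) V2)"
| E3_plus: "jk_e (Var i) V1 \<Longrightarrow> jk_e (Var j) V2 \<Longrightarrow> jk_e (Plus i j) (vadd (vscale P V1) V2)"
| E4_minus: "jk_e (Var i) V1 \<Longrightarrow> jk_e (Var j) V2 \<Longrightarrow> jk_e (Minus i j) (vadd V1 (vscale P V2))"
| E4_plus: "jk_e (Var i) V1 \<Longrightarrow> jk_e (Var j) V2 \<Longrightarrow> jk_e (Plus i j) (vadd V1 (vscale P V2))"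

inductive jk :: "nat \<Rightarrow> 'b cmd \<Rightarrow> mwpinf mat \<Rightarrow> bool" for n where
  A: "jk_e e V \<Longrightarrow> jk n (Assign j e) (colupd n j V)"
| C: "jk n C1 M1 \<Longrightarrow> jk n C2 M2 \<Longrightarrow> jk n (Seq C1 C2) (mmul n M1 M2)"
| I: "jk n C1 M1 \<Longrightarrow> jk n C2 M2 \<Longrightarrow> jk n (If b C1 C2) (madd M1 M2)"
| L: "jk n C A \<Longrightarrow> (\<forall>i<n. mstar n A i i = M) \<Longrightarrow>
      jk n (Loop l C) (madd (mstar n A)
         (\<lambda>r c. if r = l \<and> c < n \<and> (\<exists>i<n. mstar n A i c = P) then P else Zero))"
| W: "jk n C A \<Longrightarrow> (\<forall>i<n. mstar n A i i = M) \<Longrightarrow> (\<forall>i<n. \<forall>j<n. mstar n A i j \<noteq> P) \<Longrightarrow>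
      jk n (While b C) (mstar n A)"

text \<open>A choice vector a in {0,1,2}^p is a function on the choice indices {1..p}.
  Coefficients are functions from choice vectors to mwp^infinity, with pointwise
  operations (HOL-Library.Function_Algebras); constants are constant functions.\<close>

type_synonym choice = "nat \<Rightarrow> nat"
type_synonym coef = "choice \<Rightarrow> mwpinf"

definition cst :: "mwpinf \<Rightarrow> coef" where "cst \<alpha> = (\<lambda>_. \<alpha>)"

definition delta :: "nat \<Rightarrow> nat \<Rightarrow> coef" where
  "delta i k = (\<lambda>a. if a k = i then M else Zero)"

definition evalm :: "coef mat \<Rightarrow> choice \<Rightarrow> mwpinf mat" where
  "evalm A a = (\<lambda>i j. A i j a)"

text \<open>Closure in the function semi-ring: pointwise (the infinite sum is pointwise).\<close>
definition fstar :: "nat \<Rightarrow> coef mat \<Rightarrow> coef mat" where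
  "fstar n A = (\<lambda>i j a. mstar n (evalm A a) i j)"

text \<open>det_e e K V: |- e : V, where K is the set of choice indices used by E^A applications.\<close>
inductive det_e :: "expr \<Rightarrow> nat set \<Rightarrow> coef vec \<Rightarrow> bool" where
  EA_minus: "det_e (Minus i j) {k}
     (vadd (vadd (vscale (delta 0 k) (vadd (vsing i (cst M)) (vsing j (cst P))))
                 (vscale (delta 1 k) (vadd (vsing i (cst P)) (vsing j (cst M)))))
           (vscale (delta 2 k) (vadd (vsing i (cst W)) (vsing j (cst W)))))"
| EA_plus: "det_e (Plus i j) {k}
     (vadd (vadd (vscale (delta 0 k) (vadd (vsing i (cst M)) (vsing j (cst P))))
                 (vscale (delta 1 k) (vadd (vsing i (cst P)) (vsing j (cst M)))))
           (vscale (delta 2 k) (vadd (vsing i (cst W)) (vsing j (cst W)))))"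
| EM: "det_e (Times i j) {} (vadd (vsing i (cst W)) (vsing j (cst W)))"
| ES: "det_e (Var i) {} (vsing i (cst M))"

text \<open>det n C K A: |- C : A, where K is the set of choice indices of the E^A applications
  in the derivation; distinct applications get distinct indices (disjointness).\<close>
inductive det :: "nat \<Rightarrow> 'b cmd \<Rightarrow> nat set \<Rightarrow> coef mat \<Rightarrow> bool" for n where
  A: "det_e e K V \<Longrightarrow> det n (Assign j e) K (colupd n j V)"
| C: "det n C1 K1 M1 \<Longrightarrow> det n C2 K2 M2 \<Longrightarrow> K1 \<inter> K2 = {} \<Longrightarrow>
      det n (Seq C1 C2) (K1 \<union> K2) (mmul n M1 M2)"
| I: "det n C1 K1 M1 \<Longrightarrow> det n C2 K2 M2 \<Longrightarrow> K1 \<inter> K2 = {} \<Longrightarrow>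
      det n (If b C1 C2) (K1 \<union> K2) (madd M1 M2)"
| L_inf: "det n C K A \<Longrightarrow>
      det n (Loop l C) K
        (madd (madd (fstar n A)
           (\<lambda>r c a. if r = c \<and> c < n \<and> fstar n A c c a \<noteq> M then Infty else Zero))
           (\<lambda>r c a. if r = l \<and> c < n \<and> (\<exists>i<n. fstar n A i c a = P) then P else Zero))"
| W_inf: "det n C K A \<Longrightarrow>
      det n (While b C) K
        (madd (madd (fstar n A)
           (\<lambda>r c a. if r = c \<and> c < n \<and> fstar n A c c a \<noteq> M then Infty else Zero))
           (\<lambda>r c a. if r < n \<and> c < n \<and> fstar n A r c a = P then Infty else Zero))"

end

theory Submission
  imports Defs
begin

lemma plus_inf: "(x::mwpinf) + y = Infty \<longleftrightarrow> x = Infty \<or> y = Infty"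
  by (cases x; cases y; simp add: plus_mwpinf_def max_def less_eq_mwpinf_def)

lemma times_inf: "(x::mwpinf) * y = Infty \<longleftrightarrow> x = Infty \<or> y = Infty"
  by (cases x; cases y; simp add: times_mwpinf_def max_def less_eq_mwpinf_def)

lemma plus_zero_r: "(x::mwpinf) + Zero = x"
  by (cases x; simp add: plus_mwpinf_def max_def less_eq_mwpinf_def)

lemma foldr_inf:
  "foldr (\<lambda>k acc. f k + acc) xs (0::mwpinf) = Infty \<longleftrightarrow> (\<exists>k\<in>set xs. f k = Infty)"
  by (induction xs) (auto simp: plus_inf zero_mwpinf_def)

lemma mmul_inf:
  "i < n \<Longrightarrow> j < n \<Longrightarrow> mmul n A B i j = Infty \<longleftrightarrow> (\<exists>k<n. (A i k :: mwpinf) = Infty \<or> B k j = Infty)"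
  by (auto simp: mmul_def foldr_inf times_inf)

lemma mmul_inf_out: "\<not> (i < n \<and> j < n) \<Longrightarrow> mmul n A B i j = (0::mwpinf)"
  by (auto simp: mmul_def)

definition noinf :: "mwpinf mat \<Rightarrow> bool" where
  "noinf A = (\<forall>i j. A i j \<noteq> Infty)"

lemma noinf_mone: "noinf (mone n)"
  by (auto simp: noinf_def mone_def one_mwpinf_def zero_mwpinf_def)

lemma noinf_mmul: "noinf A \<Longrightarrow> noinf B \<Longrightarrow> noinf (mmul n A B)"
  unfolding noinf_def
  by (metis mmul_inf mmul_inf_out mwpinf.distinct(7) zero_mwpinf_def)

lemma noinf_madd: "noinf A \<Longrightarrow> noinf B \<Longrightarrow> noinf (madd A B)"
  by (auto simp: noinf_def madd_def plus_inf)

lemma noinf_mpow: "noinf A \<Longrightarrow> noinf (mpow n A k)"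
  by (induction k) (auto simp: noinf_mone noinf_mmul)

lemma Max_range_in: "Max (range (f :: nat \<Rightarrow> mwpinf)) \<in> range f"
  by (rule Max_in) auto

lemma Max_range_ge: "f k \<le> Max (range (f :: nat \<Rightarrow> mwpinf))"
  by (rule Max_ge) auto

lemma noinf_mstar: "noinf A \<Longrightarrow> noinf (mstar n A)"
  unfolding noinf_def mstar_def
proof (intro allI)
  fix i j assume "\<forall>i j. A i j \<noteq> Infty"
  hence "noinf A" by (simp add: noinf_def)
  from Max_range_in[of "\<lambda>k. mpow n A k i j"]
  obtain k where "Max (range (\<lambda>k. mpow n A k i j)) = mpow n A k i j"
    by (rule rangeE)
  then show "Max (range (\<lambda>k. mpow n A k i j)) \<noteq> Infty"
    using noinf_mpow[OF \<open>noinf A\<close>, of n k] by (simp add: noinf_def)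
qed

lemma Infty_top: "Infty \<le> x \<Longrightarrow> x = Infty"
  by (cases x; simp add: less_eq_mwpinf_def)

lemma mstar_inf:
  assumes "i < n" "j < n" "A i j = Infty"
  shows "mstar n A i j = Infty"
proof -
  have "mpow n A 1 i j = Infty"
    using assms by (auto simp: mmul_inf)
  then have "Infty \<le> mstar n A i j"
    unfolding mstar_def by (metis Max_range_ge)
  then show ?thesis by (rule Infty_top)
qed

lemma jk_e_noinf: "jk_e e V \<Longrightarrow> V r \<noteq> Infty"
  by (induction arbitrary: r rule: jk_e.induct)
     (auto simp: vsing_def wvars_def vadd_def vscale_def plus_inf times_inf zero_mwpinf_def)

lemma jk_noinf: "jk n C A \<Longrightarrow> noinf A"
proof (induction rule: jk.induct)
  case (A e V j)
  then show ?case
    using jk_e_noinf noinf_mone[of n]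
    by (auto simp: noinf_def colupd_def zero_mwpinf_def)
next
  case (C C1 M1 C2 M2)
  then show ?case by (simp add: noinf_mmul)
next
  case (I C1 M1 C2 M2 b)
  then show ?case by (simp add: noinf_madd)
next
  case (L C A l)
  then show ?case using noinf_mstar[of A n]
    by (auto simp: noinf_def madd_def plus_inf)
next
  case (W C A b)
  then show ?case by (simp add: noinf_mstar)
qed

lemma foldr_eval:
  "foldr (\<lambda>k. (+) (F k)) xs (\<lambda>x. 0::mwpinf) a = foldr (\<lambda>k. (+) (F k a)) xs 0"
  by (induction xs) (auto simp: plus_fun_def zero_fun_def)

lemma evalm_mmul: "evalm (mmul n A B) a = mmul n (evalm A a) (evalm B a)"
proof (intro ext)
  fix i j
  show "evalm (mmul n A B) a i j = mmul n (evalm A a) (evalm B a) i j"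
    unfolding evalm_def mmul_def zero_fun_def
    using foldr_eval[where F="\<lambda>k x. A i k x * B k j x" and xs="[0..<n]" and a=a]
    by (simp add: times_fun_def)
qed

lemma evalm_madd: "evalm (madd A B) a = madd (evalm A a) (evalm B a)"
  by (auto simp: evalm_def madd_def plus_fun_def)

lemma evalm_colupd: "evalm (colupd n j V) a = colupd n j (\<lambda>r. V r a)"
  by (auto simp: evalm_def colupd_def mone_def zero_fun_def one_fun_def intro!: ext)

lemma det_e_jk:
  assumes "det_e e K V" "\<forall>k\<in>K. a k \<in> {0,1,2}"
  shows "jk_e e (\<lambda>r. V r a)"
  using assms
proof (cases rule: det_e.cases)
  case (EA_minus i j k)
  have ak: "a k = 0 \<or> a k = 1 \<or> a k = 2" using assms(2) EA_minus by auto
  moreover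
  { assume "a k = 0"
    then have "(\<lambda>r. V r a) = vadd (vsing i M) (vscale P (vsing j M))"
      using EA_minus
      by (auto simp: vadd_def vscale_def vsing_def delta_def cst_def plus_fun_def times_fun_def
          zero_fun_def plus_mwpinf_def times_mwpinf_def zero_mwpinf_def max_def less_eq_mwpinf_def
          intro!: ext)
    then have ?thesis using EA_minus by (simp add: jk_e.E4_minus jk_e.E1) }
  moreover
  { assume "a k = 1"
    then have "(\<lambda>r. V r a) = vadd (vscale P (vsing i M)) (vsing j M)"
      using EA_minus
      by (auto simp: vadd_def vscale_def vsing_def delta_def cst_def plus_fun_def times_fun_def
          zero_fun_def plus_mwpinf_def times_mwpinf_def zero_mwpinf_def max_def less_eq_mwpinf_def
          intro!: ext)
    then have ?thesis using EA_minus by (simp add: jk_e.E3_minus jk_e.E1) }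
  moreover
  { assume "a k = 2"
    then have "(\<lambda>r. V r a) = wvars (Minus i j)"
      using EA_minus
      by (auto simp: vadd_def vscale_def vsing_def delta_def cst_def plus_fun_def times_fun_def wvars_def
          zero_fun_def plus_mwpinf_def times_mwpinf_def zero_mwpinf_def max_def less_eq_mwpinf_def
          intro!: ext)
    then have ?thesis using EA_minus by (simp add: jk_e.E2) }
  ultimately show ?thesis by blast
next
  case (EA_plus i j k)
  have ak: "a k = 0 \<or> a k = 1 \<or> a k = 2" using assms(2) EA_plus by auto
  moreover
  { assume "a k = 0"
    then have "(\<lambda>r. V r a) = vadd (vsing i M) (vscale P (vsing j M))"
      using EA_plus
      by (auto simp: vadd_def vscale_def vsing_def delta_def cst_def plus_fun_def times_fun_def
          zero_fun_def plus_mwpinf_def times_mwpinf_def zero_mwpinf_def max_def less_eq_mwpinf_def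
          intro!: ext)
    then have ?thesis using EA_plus by (simp add: jk_e.E4_plus jk_e.E1) }
  moreover
  { assume "a k = 1"
    then have "(\<lambda>r. V r a) = vadd (vscale P (vsing i M)) (vsing j M)"
      using EA_plus
      by (auto simp: vadd_def vscale_def vsing_def delta_def cst_def plus_fun_def times_fun_def
          zero_fun_def plus_mwpinf_def times_mwpinf_def zero_mwpinf_def max_def less_eq_mwpinf_def
          intro!: ext)
    then have ?thesis using EA_plus by (simp add: jk_e.E3_plus jk_e.E1) }
  moreover
  { assume "a k = 2"
    then have "(\<lambda>r. V r a) = wvars (Plus i j)"
      using EA_plus
      by (auto simp: vadd_def vscale_def vsing_def delta_def cst_def plus_fun_def times_fun_def wvars_def
          zero_fun_def plus_mwpinf_def times_mwpinf_def zero_mwpinf_def max_def less_eq_mwpinf_def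
          intro!: ext)
    then have ?thesis using EA_plus by (simp add: jk_e.E2) }
  ultimately show ?thesis by blast
next
  case (EM i j)
  then have "(\<lambda>r. V r a) = wvars (Times i j)"
    by (auto simp: vadd_def vsing_def cst_def plus_fun_def wvars_def
          zero_fun_def plus_mwpinf_def zero_mwpinf_def max_def less_eq_mwpinf_def
          intro!: ext)
  then show ?thesis using EM by (simp add: jk_e.E2)
next
  case (ES i)
  then have "(\<lambda>r. V r a) = vsing i M"
    by (auto simp: vsing_def cst_def zero_fun_def zero_mwpinf_def intro!: ext)
  then show ?thesis using ES by (simp add: jk_e.E1)
qed

lemma madd_zero_r: "(\<forall>r c. Z r c = Zero) \<Longrightarrow> madd X Z = X"
  by (auto simp: madd_def plus_zero_r intro!: ext)

lemma det_jk:
  "det n C K A \<Longrightarrow> (\<forall>k\<in>K. a k \<in> {0,1,2}) \<Longrightarrow> (\<forall>i<n. \<forall>j<n. evalm A a i j \<noteq> Infty)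
   \<Longrightarrow> jk n C (evalm A a)"
proof (induction rule: det.induct)
  case (A e K V j)
  then show ?case by (simp add: evalm_colupd jk.A det_e_jk)
next
  case (C C1 K1 M1 C2 K2 M2)
  have h: "\<forall>i<n. \<forall>j<n. mmul n (evalm M1 a) (evalm M2 a) i j \<noteq> Infty"
    using C.prems(2) by (simp add: evalm_mmul)
  have 1: "\<forall>i<n. \<forall>j<n. evalm M1 a i j \<noteq> Infty"
  proof (intro allI impI)
    fix i j assume "i < n" "j < n"
    then show "evalm M1 a i j \<noteq> Infty" using h mmul_inf[of i n j "evalm M1 a" "evalm M2 a"] by blast
  qed
  have 2: "\<forall>i<n. \<forall>j<n. evalm M2 a i j \<noteq> Infty"
  proof (intro allI impI)
    fix i j assume "i < n" "j < n"
    then show "evalm M2 a i j \<noteq> Infty" using h mmul_inf[of i n j "evalm M1 a" "evalm M2 a"] by blast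
  qed
  show ?case using C 1 2 by (simp add: evalm_mmul jk.C)
next
  case (I C1 K1 M1 C2 K2 M2 b)
  have 1: "\<forall>i<n. \<forall>j<n. evalm M1 a i j \<noteq> Infty" and 2: "\<forall>i<n. \<forall>j<n. evalm M2 a i j \<noteq> Infty"
    using I.prems(2) by (auto simp: evalm_def madd_def plus_fun_def plus_inf)
  have "jk n C1 (evalm M1 a)" using I.IH(1) I.prems(1) 1 by blast
  moreover have "jk n C2 (evalm M2 a)" using I.IH(2) I.prems(1) 2 by blast
  ultimately show ?case by (simp add: evalm_madd jk.I)
next
  case (L_inf C K A l)
  let ?S = "mstar n (evalm A a)"
  have fs: "\<And>i j. fstar n A i j a = ?S i j" by (simp add: fstar_def)
  have E: "\<forall>i<n. \<forall>j<n. ?S i j \<noteq> Infty \<and> (i = j \<longrightarrow> ?S j j = M)"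
    using L_inf.prems(2) by (auto simp: evalm_def madd_def plus_fun_def fs plus_inf split: if_splits)
  have Ai: "\<forall>i<n. \<forall>j<n. evalm A a i j \<noteq> Infty"
    using E mstar_inf by blast
  have jkC: "jk n C (evalm A a)" using L_inf.IH L_inf.prems(1) Ai by blast
  have eq: "evalm (madd (madd (fstar n A)
           (\<lambda>r c a. if r = c \<and> c < n \<and> fstar n A c c a \<noteq> M then Infty else Zero))
           (\<lambda>r c a. if r = l \<and> c < n \<and> (\<exists>i<n. fstar n A i c a = P) then P else Zero)) a
     = madd ?S (\<lambda>r c. if r = l \<and> c < n \<and> (\<exists>i<n. ?S i c = P) then P else Zero)"
    using E by (auto simp: evalm_def madd_def plus_fun_def fs plus_zero_r intro!: ext)
  show ?case unfolding eq using jkC E by (intro jk.L) auto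
next
  case (W_inf C K A b)
  let ?S = "mstar n (evalm A a)"
  have fs: "\<And>i j. fstar n A i j a = ?S i j" by (simp add: fstar_def)
  have E: "\<forall>i<n. \<forall>j<n. ?S i j \<noteq> Infty \<and> (i = j \<longrightarrow> ?S j j = M) \<and> ?S i j \<noteq> P"
    using W_inf.prems(2) by (auto simp: evalm_def madd_def plus_fun_def fs plus_inf split: if_splits)
  have Ai: "\<forall>i<n. \<forall>j<n. evalm A a i j \<noteq> Infty"
    using E mstar_inf by blast
  have jkC: "jk n C (evalm A a)" using W_inf.IH W_inf.prems(1) Ai by blast
  have eq: "evalm (madd (madd (fstar n A)
           (\<lambda>r c a. if r = c \<and> c < n \<and> fstar n A c c a \<noteq> M then Infty else Zero))
           (\<lambda>r c a. if r < n \<and> c < n \<and> fstar n A r c a = P then Infty else Zero)) a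
     = ?S"
    using E by (auto simp: evalm_def madd_def plus_fun_def fs plus_zero_r intro!: ext)
  show ?case unfolding eq using jkC E by (intro jk.W) auto
qed

theorem theorem10:
  fixes n p :: nat and Prog :: "'b cmd" and Mf :: "coef mat" and a :: choice
  assumes "cvars Prog \<subseteq> {..<n}"
    and "det n Prog {1..p} Mf"
    and "a \<in> {1..p} \<rightarrow>\<^sub>E {0, 1, 2}"
  shows "jk n Prog (evalm Mf a) \<longleftrightarrow> (\<forall>i<n. \<forall>j<n. evalm Mf a i j \<noteq> Infty)"
proof
  assume "jk n Prog (evalm Mf a)"
  then show "\<forall>i<n. \<forall>j<n. evalm Mf a i j \<noteq> Infty"
    using jk_noinf unfolding noinf_def by metis
next
  assume "\<forall>i<n. \<forall>j<n. evalm Mf a i j \<noteq> Infty"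
  moreover have "\<forall>k\<in>{1..p}. a k \<in> {0,1,2}" using assms(3) unfolding PiE_def Pi_def by blast
  ultimately show "jk n Prog (evalm Mf a)"
    using det_jk[OF assms(2)] by blast
qed

end
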